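(* There exist $U<0$ and constants $0<c\le C$ such that the following holds for every $u_0<U$, every $s\in[0,1]$, and every smooth function $\phi$ on $\overline{\Omega_{u_0}}$ (up to $\mathscr I^+$): $$c\,I_s(\phi)\le\mathcal E_{\mathcal H_{s,u_0}}(\phi)\le C\,I_s(\phi),$$ where $$I_s(\phi)=\int_{]-\infty,u_0[\times S^2}\Big(u^2(\partial_u\phi)^2+\frac{R}{|u|}(\partial_R\phi)^2+|\nabla_{S^2}\phi|^2\Big)\,du\,d^2\omega,$$ the integrand being evaluated on $\mathcal H_{s,u_0}$. For $s=0$ the two quantities coincide, i.e. $\mathcal E_{\mathscr I^+_{u_0}}(\phi)=\int_{]-\infty,u_0[\times S^2}\big(u^2(\partial_u\phi)^2+|\nabla_{S^2}\phi|^2\big)\,du\,d^2\omega$.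
   Context: Fix $M>0$. On the extreme Reissner–Nordström exterior, use the outgoing chart $(u,R,\omega)$, where: - $R=1/r$, $u=t-r_*$, $r_*=r-M+2M\log\frac{r-M}{M}-\frac{M^2}{r-M}$; - the rescaled metric is $\hat g=R^2(1-MR)^2du^2-2\,du\,dR-d\omega^2$, extending to $\mathscr I^+=\{R=0\}$; - $\partial_t$ is future-directed; - $d^2\omega$ denotes the area form of the unit sphere, $\nabla_{S^2}$ its gradient. Regions, for $u_0<0$: - $\Omega_{u_0}=\{t\ge0\}\cap\{u<u_0\}$; - for $0<s\le1$, $\mathcal H_{s,u_0}=\{u=-sr_*\}\cap\{u<u_0\}$, so that $\mathcal H_{1,u_0}=\{t=0\}\cap\{u<u_0\}$; - $\mathcal H_{0,u_0}=\mathscr I^+_{u_0}=\{R=0,\ u<u_0\}$. Each $\mathcal H_{s,u_0}$ is parametrised by $(u,\omega)\in]-\infty,u_0[\times S^2$. Energy flux. Let $T_{ab}(\phi)=\hat\nabla_a\phi\,\hat\nabla_b\phi-\frac12\hat g^{cd}\hat\nabla_c\phi\hat\nabla_d\phi\,\hat g_{ab}$. Let $K=u^2\partial_u-2(1+uR)\partial_R$ be the Morawetz vector field and $J_a(\phi)=K^bT_{ab}(\phi)$. For a spacelike or null hypersurface $\Sigma$, define $$\mathcal E_\Sigma(\phi)=\int_\Sigma J_a(\phi)\tilde n^a\,d\mu,$$ where: - $\tilde n$ is a future-directed normal to $\Sigma$; - $\tilde l$ is transverse to $\Sigma$ with $\hat g(\tilde l,\tilde n)=1$; - $d\mu$ is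 the positive measure induced on $\Sigma$ by $\tilde l\lrcorner(du\wedge dR\wedge d^2\omega)$. This definition is independent of the choice of $\tilde n$ and $\tilde l$. Explicitly, for $0<s\le1$, the integrand being evaluated on $\mathcal H_{s,u_0}$: $$\mathcal E_{\mathcal H_{s,u_0}}(\phi)=\int_{]-\infty,u_0[\times S^2}\Big(R^2(1-MR)^2u^2\,\partial_u\phi\,\partial_R\phi+u^2(\partial_u\phi)^2$$ $$+\frac{R^2(1-MR)^2}{2s}\big((Ru)^2(1-MR)^2+2(2-s)Ru+2(2-s)\big)(\partial_R\phi)^2$$ $$+\Big(Ru+\frac{(Ru)^2(1-MR)^2}{2s}+1\Big)|\nabla_{S^2}\phi|^2\Big)\,du\,d^2\omega.$$ *)

theory Defs
  imports "HOL-Analysis.Analysis"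
begin

coinductive smooth_on :: "('a::real_normed_vector \<Rightarrow> real) \<Rightarrow> 'a set \<Rightarrow> bool" where
  "f differentiable_on S \<Longrightarrow>
   (\<forall>v. smooth_on (\<lambda>x. frechet_derivative f (at x) v) S) \<Longrightarrow> smooth_on f S"

definition rstar :: "real \<Rightarrow> real \<Rightarrow> real" where
  "rstar M r = r - M + 2 * M * ln ((r - M) / M) - M\<^sup>2 / (r - M)"

text \<open>Points are (u, R, x) with x in R^3; the sphere is the unit sphere of R^3.
The closure of Omega_{u0} in the rescaled spacetime (including scri+ = {R = 0}).
Here t = u + r_*, r = 1/R, and the exterior is r > M, i.e. 0 < R < 1/M.\<close>
definition closOmega :: "real \<Rightarrow> real \<Rightarrow> (real \<times> real \<times> (real^3)) set" where
  "closOmega M u0 = {(u, R, \<omega>). \<omega> \<in> sphere 0 1 \<and> u \<le> u0 \<and> 0 \<le> R \<and> R < 1 / M \<and>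
      (R = 0 \<or> u + rstar M (1 / R) \<ge> 0)}"

definition smooth_up_to_scri :: "real \<Rightarrow> real \<Rightarrow> (real \<times> real \<times> (real^3) \<Rightarrow> real) \<Rightarrow> bool" where
  "smooth_up_to_scri M u0 \<phi> \<longleftrightarrow> (\<exists>S. open S \<and> closOmega M u0 \<subseteq> S \<and> smooth_on \<phi> S)"

text \<open>Coordinate partial derivatives and the squared norm of the gradient along the
unit sphere (round metric induced from R^3).\<close>
definition d_u :: "(real \<times> real \<times> (real^3) \<Rightarrow> real) \<Rightarrow> real \<Rightarrow> real \<Rightarrow> real^3 \<Rightarrow> real" where
  "d_u \<phi> u R \<omega> = frechet_derivative \<phi> (at (u, R, \<omega>)) (1, 0, 0)"

definition d_R :: "(real \<times> real \<times> (real^3) \<Rightarrow> real) \<Rightarrow> real \<Rightarrow> real \<Rightarrow> real^3 \<Rightarrow> real" where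
  "d_R \<phi> u R \<omega> = frechet_derivative \<phi> (at (u, R, \<omega>)) (0, 1, 0)"

definition grad_S2_sq :: "(real \<times> real \<times> (real^3) \<Rightarrow> real) \<Rightarrow> real \<Rightarrow> real \<Rightarrow> real^3 \<Rightarrow> real" where
  "grad_S2_sq \<phi> u R \<omega> =
     (SUP v\<in>{v::real^3. inner v \<omega> = 0 \<and> norm v = 1}.
        (frechet_derivative \<phi> (at (u, R, \<omega>)) (0, 0, v))\<^sup>2)"

text \<open>Integration over ]-infinity,u0[ x S^2 with du d^2omega, the area form of the unit
sphere written in spherical coordinates (sin theta dtheta dvartheta).\<close>
definition sph :: "real \<Rightarrow> real \<Rightarrow> real^3" where
  "sph \<theta> \<psi> = vector [sin \<theta> * cos \<psi>, sin \<theta> * sin \<psi>, cos \<theta>]"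

definition int_S2 :: "(real^3 \<Rightarrow> ennreal) \<Rightarrow> ennreal" where
  "int_S2 g = (\<integral>\<^sup>+ \<theta>. \<integral>\<^sup>+ \<psi>. ennreal (sin \<theta>) * g (sph \<theta> \<psi>)
        * indicator {0<..<pi} \<theta> * indicator {0<..<2 * pi} \<psi> \<partial>lborel \<partial>lborel)"

definition int_H :: "real \<Rightarrow> (real \<Rightarrow> real^3 \<Rightarrow> real) \<Rightarrow> ennreal" where
  "int_H u0 f = (\<integral>\<^sup>+ u. indicator {..<u0} u * int_S2 (\<lambda>\<omega>. ennreal (f u \<omega>)) \<partial>lborel)"

text \<open>On H_{s,u0} (0 < s), R is the function of u determined by u = - s r_*(1/R), r > M;
on H_{0,u0} = scri+, R = 0.\<close>
definition Rsurf :: "real \<Rightarrow> real \<Rightarrow> real \<Rightarrow> real" where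
  "Rsurf M s u = (if s = 0 then 0 else 1 / (THE r. r > M \<and> rstar M r = - u / s))"

definition flux_density :: "real \<Rightarrow> real \<Rightarrow> real \<Rightarrow> real \<Rightarrow> real \<Rightarrow> real \<Rightarrow> real \<Rightarrow> real" where
  "flux_density M s u R a b g =
     R\<^sup>2 * (1 - M * R)\<^sup>2 * u\<^sup>2 * a * b + u\<^sup>2 * a\<^sup>2
     + R\<^sup>2 * (1 - M * R)\<^sup>2 / (2 * s) * ((R*u)\<^sup>2 * (1 - M * R)\<^sup>2 + 2*(2 - s)*R*u + 2*(2 - s)) * b\<^sup>2
     + (R*u + (R*u)\<^sup>2 * (1 - M * R)\<^sup>2 / (2 * s) + 1) * g"

text \<open>Geometric flux density J_a n^a = K^b T_ab n^a on scri+ = {R = 0}, computed in the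
(u,R) block of the rescaled metric g = R^2(1-MR)^2 du^2 - 2 du dR - domega^2 with
future-directed normal n = d/du, transverse l = - d/dR (g(l,n) = 1, so that
l contracted into du/\dR/\d^2omega induces du d^2omega).  Here a = d_u phi, b = d_R phi,
g = |grad_S2 phi|^2; K = u^2 d/du - 2(1+uR) d/dR.\<close>
definition scri_flux_density :: "real \<Rightarrow> real \<Rightarrow> real \<Rightarrow> real \<Rightarrow> real \<Rightarrow> real \<Rightarrow> real" where
  "scri_flux_density M u R a b g =
     (let guu = R\<^sup>2 * (1 - M * R)\<^sup>2; guR = -1; gRR = 0;
          iuu = 0; iuR = -1; iRR = - R\<^sup>2 * (1 - M * R)\<^sup>2;
          sq = iuu * a\<^sup>2 + 2 * iuR * a * b + iRR * b\<^sup>2 - g;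
          Tuu = a * a - sq / 2 * guu; TuR = a * b - sq / 2 * guR; TRR = b * b - sq / 2 * gRR;
          Ku = u\<^sup>2; KR = - 2 * (1 + u * R);
          nu = 1; nR = 0
      in nu * (Ku * Tuu + KR * TuR) + nR * (Ku * TuR + KR * TRR))"

definition energy :: "real \<Rightarrow> real \<Rightarrow> real \<Rightarrow> (real \<times> real \<times> (real^3) \<Rightarrow> real) \<Rightarrow> ennreal" where
  "energy M s u0 \<phi> =
     (if s = 0 then
        int_H u0 (\<lambda>u \<omega>. scri_flux_density M u 0 (d_u \<phi> u 0 \<omega>) (d_R \<phi> u 0 \<omega>) (grad_S2_sq \<phi> u 0 \<omega>))
      else
        int_H u0 (\<lambda>u \<omega>. let R = Rsurf M s u in
          flux_density M s u R (d_u \<phi> u R \<omega>) (d_R \<phi> u R \<omega>) (grad_S2_sq \<phi> u R \<omega>)))"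

definition Ienergy :: "real \<Rightarrow> real \<Rightarrow> real \<Rightarrow> (real \<times> real \<times> (real^3) \<Rightarrow> real) \<Rightarrow> ennreal" where
  "Ienergy M s u0 \<phi> =
     int_H u0 (\<lambda>u \<omega>. let R = Rsurf M s u in
        u\<^sup>2 * (d_u \<phi> u R \<omega>)\<^sup>2 + R / \<bar>u\<bar> * (d_R \<phi> u R \<omega>)\<^sup>2 + grad_S2_sq \<phi> u R \<omega>)"

end

theory Submission
  imports Defs "HOL-Real_Asymp.Real_Asymp"
begin


lemma rstar_mono:
  assumes "M > 0" "M < r" "r < r'"
  shows "rstar M r < rstar M r'"
proof -
  have a: "ln ((r - M) / M) \<le> ln ((r' - M) / M)"
    using assms by (simp add: divide_right_mono)
  have b: "M\<^sup>2 / (r' - M) \<le> M\<^sup>2 / (r - M)"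
    using assms by (intro divide_left_mono) auto
  show ?thesis unfolding rstar_def using a b assms
    by (smt (verit) mult_left_mono)
qed

lemma rstar_ge: assumes "M > 0" "2*M \<le> r" shows "rstar M r \<ge> r - 2*M"
proof -
  have "ln ((r - M) / M) \<ge> 0" using assms by simp
  moreover have "M\<^sup>2 / (r - M) \<le> M" using assms by (simp add: divide_le_eq power2_eq_square)
  ultimately show ?thesis unfolding rstar_def using assms by (smt (verit) mult_nonneg_nonneg)
qed

lemma rstar_2M: "M > 0 \<Longrightarrow> rstar M (2*M) = 0"
  by (simp add: rstar_def power2_eq_square)

lemma rstar_cont: "M > 0 \<Longrightarrow> continuous_on {2*M..b} (rstar M)"
  unfolding rstar_def by (intro continuous_intros) auto

lemma rstar_exists:
  assumes "M > 0" "y \<ge> 0"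
  shows "\<exists>!r. r > M \<and> rstar M r = y"
proof -
  have "\<exists>r\<ge>2*M. r \<le> y + 2*M \<and> rstar M r = y"
    using IVT'[of "rstar M" "2*M" y "y + 2*M"] rstar_2M[OF assms(1)] rstar_ge[OF assms(1), of "y+2*M"]
      rstar_cont[OF assms(1)] assms by auto
  then obtain r where r: "r > M" "rstar M r = y" using assms by force
  show ?thesis
  proof (rule ex1I[of _ r])
    show "M < r \<and> rstar M r = y" using r by auto
    fix r' assume "M < r' \<and> rstar M r' = y"
    then show "r' = r" using rstar_mono[OF assms(1)] r by (metis linorder_neqE_linordered_idom less_irrefl)
  qed
qed

lemma rstar_asymp: "M > 0 \<Longrightarrow> ((\<lambda>r. rstar M r / r) \<longlongrightarrow> 1) at_top"
  unfolding rstar_def by real_asymp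

lemma choose_U:
  assumes M: "M > 0"
  shows "\<exists>U<0. \<forall>s u. 0 < s \<and> s \<le> 1 \<and> u < U \<longrightarrow>
     Rsurf M s u > 0 \<and> Rsurf M s u < 1/M \<and> u + rstar M (1 / Rsurf M s u) \<ge> 0 \<and>
     (\<exists>t. 99/100 \<le> t \<and> t \<le> 101/100 \<and> Rsurf M s u * u = -(s*t)) \<and> M * Rsurf M s u \<le> 1/100"
proof -
  have e1: "\<forall>\<^sub>F r in at_top. dist (rstar M r / r) 1 < 1/100"
    using rstar_asymp[OF M] by (rule tendstoD) simp
  have e2: "\<forall>\<^sub>F r in at_top. r > 100 * M" by (rule eventually_gt_at_top)
  obtain N where N: "\<And>r. r \<ge> N \<Longrightarrow> dist (rstar M r / r) 1 < 1/100 \<and> r > 100 * M"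
    using eventually_conj[OF e1 e2] unfolding eventually_at_top_linorder by blast
  define r0 where "r0 = max N (2*M)"
  define U where "U = -(\<bar>rstar M r0\<bar> + 1)"
  have "U < 0" unfolding U_def by simp
  moreover have "0 < s \<and> s \<le> 1 \<and> u < U \<longrightarrow>
     Rsurf M s u > 0 \<and> Rsurf M s u < 1/M \<and> u + rstar M (1 / Rsurf M s u) \<ge> 0 \<and>
     (\<exists>t. 99/100 \<le> t \<and> t \<le> 101/100 \<and> Rsurf M s u * u = -(s*t)) \<and> M * Rsurf M s u \<le> 1/100" for s u
  proof safe
    assume s: "0 < s" "s \<le> 1" and u: "u < U"
    define y where "y = - u / s"
    have uneg: "u < 0" using u U_def by simp
    have "-u \<le> y" unfolding y_def using mult_left_mono_neg[of s 1 u] s uneg by (simp add: le_divide_eq divide_le_eq)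
    then have y: "y > \<bar>rstar M r0\<bar>" using u U_def by simp
    then have y0: "y \<ge> 0" by simp
    obtain r where r: "r > M" "rstar M r = y" using rstar_exists[OF M y0] by blast
    have "(THE r. r > M \<and> rstar M r = - u / s) = r"
      using rstar_exists[OF M y0] r unfolding y_def by (intro the1_equality) auto
    then have Rs: "Rsurf M s u = 1 / r" unfolding Rsurf_def using s by simp
    have rr0: "r \<ge> r0"
    proof (rule ccontr)
      assume "\<not> r \<ge> r0"
      then have "rstar M r < rstar M r0" using rstar_mono[OF M r(1)] by simp
      then show False using r y by simp
    qed
    then have Nr: "dist (rstar M r / r) 1 < 1/100" "r > 100 * M" using N r0_def by auto
    have rpos: "r > 0" using r M by simp
    show "Rsurf M s u > 0" using Rs rpos by simp
    show "Rsurf M s u < 1/M" using Rs r M by (simp add: divide_strict_left_mono)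
    show "u + rstar M (1 / Rsurf M s u) \<ge> 0" using Rs r \<open>-u \<le> y\<close> by simp
    show "M * Rsurf M s u \<le> 1/100" unfolding Rs using Nr(2) rpos by (simp add: field_simps)
    show "\<exists>t. 99/100 \<le> t \<and> t \<le> 101/100 \<and> Rsurf M s u * u = -(s*t)"
    proof (intro exI conjI)
      have "\<bar>y / r - 1\<bar> < 1/100" using Nr(1) r(2) by (simp add: dist_real_def)
      then show "99/100 \<le> y / r" "y / r \<le> 101/100" by linarith+
      show "Rsurf M s u * u = -(s * (y / r))" using Rs s unfolding y_def by (simp add: field_simps)
    qed
  qed
  ultimately show ?thesis by blast
qed



lemma lin_aux: "(x::real) = P + a - 4*b + 2*c - 2/3*d \<Longrightarrow> P = 1/3 + w1 + w2 + w3 \<Longrightarrow>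
  0 \<le> w1 \<Longrightarrow> 0 \<le> w2 \<Longrightarrow> 0 \<le> w3 \<Longrightarrow> \<bar>a\<bar> \<le> 4/100 \<Longrightarrow> \<bar>d\<bar> \<le> 4/100
  \<Longrightarrow> \<bar>b\<bar> \<le> 1/100 \<Longrightarrow> \<bar>c\<bar> \<le> 1/100 \<Longrightarrow> x \<ge> 1/5"
  by linarith

lemma lin_aux2: "(A::real) \<le> 1 * (103/100) \<Longrightarrow> C \<le> 1 * (103/100) \<Longrightarrow> 0 \<le> B \<Longrightarrow> 0 < s \<Longrightarrow>
   A - 2 * B + 2*(2-s) + 2 * C / 3 \<le> 8"
  by (simp add: field_simps)

lemma lin_aux3: "1/5 \<le> (A::real) - 2 * C * q / 3 \<Longrightarrow> 0 \<le> C * q \<Longrightarrow> 0 \<le> A + 2 * C * q / 3"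
  by (simp add: field_simps)

lemma id_aux: "p * X / 2 + p * S * q / 3 = p/2*(X + 2*S*q/3)" "p * X / 2 - p * S * q / 3 = p/2*(X - 2*S*q/3)"
  for p X S q :: real by (simp_all add: field_simps)

lemma F1:
  fixes s t p q :: real
  assumes s: "0 < s" "s \<le> 1" and t: "99/100 \<le> t" "t \<le> 101/100" and p: "98/100 \<le> p" "p \<le> 1"
    and q: "q = t^2 * p"
  shows "1/(20*t) \<le> p * (s^2 * q - 2*(2-s) * s * t + 2*(2-s)) / 2 - p * s^3 * q / 3"
    and "p * (s^2 * q - 2*(2-s) * s * t + 2*(2-s)) / 2 + p * s^3 * q / 3 \<le> 5 / t"
proof -
  have t2a: "t^2 \<le> (101/100)^2" using t by (intro power_mono) auto
  have t2b: "(99/100)^2 \<le> t^2" using t by (intro power_mono) auto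
  have "t^2 * p \<le> (101/100)^2 * 1" using t2a p by (intro mult_mono) auto
  then have q1: "q \<le> 103/100" using q by (simp add: power2_eq_square)
  have "(99/100)^2 * (98/100) \<le> t^2 * p" using t2b p by (intro mult_mono) auto
  then have q2: "96/100 \<le> q" using q by (simp add: power2_eq_square)
  have s2: "0 \<le> s^2" "s^2 \<le> 1" using s by (auto simp: power_le_one)
  have s3: "0 \<le> s^3" "s^3 \<le> 1" using s by (auto simp: power_le_one)
  have qa: "\<bar>q - 1\<bar> \<le> 4/100" using q1 q2 by linarith
  have ta: "\<bar>t - 1\<bar> \<le> 1/100" using t by linarith
  have e1: "\<bar>s^2 * (q - 1)\<bar> \<le> 4/100"
  proof -
    have "\<bar>s^2 * (q - 1)\<bar> = s^2 * \<bar>q - 1\<bar>" by (simp add: abs_mult)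
    also have "\<dots> \<le> 1 * (4/100)" using s2 qa by (intro mult_mono) auto
    finally show ?thesis by simp
  qed
  have e2: "\<bar>s^3 * (q - 1)\<bar> \<le> 4/100"
  proof -
    have "\<bar>s^3 * (q - 1)\<bar> = s^3 * \<bar>q - 1\<bar>" using s3 by (simp add: abs_mult)
    also have "\<dots> \<le> 1 * (4/100)" using s3 qa by (intro mult_mono) auto
    finally show ?thesis by simp
  qed
  have e3: "\<bar>s * (t - 1)\<bar> \<le> 1/100"
  proof -
    have "\<bar>s * (t - 1)\<bar> = s * \<bar>t - 1\<bar>" using s by (simp add: abs_mult)
    also have "\<dots> \<le> 1 * (1/100)" using s ta by (intro mult_mono) auto
    finally show ?thesis by simp
  qed
  have e4: "\<bar>s^2 * (t - 1)\<bar> \<le> 1/100"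
  proof -
    have "\<bar>s^2 * (t - 1)\<bar> = s^2 * \<bar>t - 1\<bar>" by (simp add: abs_mult)
    also have "\<dots> \<le> 1 * (1/100)" using s2 ta by (intro mult_mono) auto
    finally show ?thesis by simp
  qed
  have poly: "3* s^2 - 6 * s + 4 - 2* s^3/3 = 1/3 + 2*(1-s) + (1-s)^2 + 2*(1-s)^3/3"
    by algebra
  have w: "0 \<le> (1-s)^2" "0 \<le> (1-s)^3" "0 \<le> 1 - s" using s by auto
  have expand: "s^2 * q - 2*(2-s) * s * t + 2*(2-s) - 2 * s^3 * q / 3
      = (3* s^2 - 6 * s + 4 - 2* s^3/3) + s^2*(q-1) - 4*(s*(t-1)) + 2*(s^2*(t-1)) - 2/3*(s^3*(q-1))"
    by (simp add: algebra_simps power2_eq_square power3_eq_cube)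
  have K: "s^2 * q - 2*(2-s) * s * t + 2*(2-s) - 2 * s^3 * q / 3 \<ge> 1/5"
    by (rule lin_aux[OF expand poly _ _ _ e1 e2 e3 e4]) (use w in auto)
  have "p * (s^2 * q - 2*(2-s) * s * t + 2*(2-s)) / 2 - p * s^3 * q / 3
     = p/2 * (s^2 * q - 2*(2-s) * s * t + 2*(2-s) - 2 * s^3 * q / 3)" by (rule id_aux)
  also have "\<dots> \<ge> (98/100)/2 * (1/5)" using K p by (intro mult_mono) auto
  finally have L: "p * (s^2 * q - 2*(2-s) * s * t + 2*(2-s)) / 2 - p * s^3 * q / 3 \<ge> 49/500" by simp
  have "1/(20*t) \<le> 1/(20*(99/100))" using t by (intro divide_left_mono) auto
  then show "1/(20*t) \<le> p * (s^2 * q - 2*(2-s) * s * t + 2*(2-s)) / 2 - p * s^3 * q / 3" using L by simp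
  have u1: "s^2 * q \<le> 1 * (103/100)" using s2 q1 q2 by (intro mult_mono) auto
  have u2: "s^3 * q \<le> 1 * (103/100)" using s3 q1 q2 by (intro mult_mono) auto
  have u3: "0 \<le> (2-s) * s * t" using s t by simp
  have u4: "0 \<le> s^2 * q" "0 \<le> s^3 * q" using s2 s3 q2 by auto
  have U: "s^2 * q - 2*(2-s) * s * t + 2*(2-s) + 2 * s^3 * q / 3 \<le> 8"
  proof -
    have "s^2 * q - 2*(2-s) * s * t + 2*(2-s) + 2 * s^3 * q / 3 = s^2 * q - 2*((2-s) * s * t) + 2*(2-s) + 2 * (s^3 * q) / 3"
      by (simp only: mult.assoc)
    also have "\<dots> \<le> 8" by (rule lin_aux2[OF u1 u2 u3 s(1)])
    finally show ?thesis .
  qed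
  have U0: "0 \<le> s^2 * q - 2*(2-s) * s * t + 2*(2-s) + 2 * s^3 * q / 3"
    using lin_aux3[OF K u4(2)] by simp
  have "p * (s^2 * q - 2*(2-s) * s * t + 2*(2-s)) / 2 + p * s^3 * q / 3
     = p/2 * (s^2 * q - 2*(2-s) * s * t + 2*(2-s) + 2 * s^3 * q / 3)" by (rule id_aux)
  also have "\<dots> \<le> 1/2 * 8" by (rule mult_mono) (use U U0 p in linarith)+
  also have "\<dots> \<le> 5/t" using t by (simp add: le_divide_eq)
  finally show "p * (s^2 * q - 2*(2-s) * s * t + 2*(2-s)) / 2 + p * s^3 * q / 3 \<le> 5 / t" .
qed



lemma nn_cmult_le: "c * integral\<^sup>N M f \<le> (\<integral>\<^sup>+x. c * f x \<partial>M)"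
proof -
  have "c * integral\<^sup>N M f = (SUP g\<in>{g. simple_function M g \<and> g \<le> f}. c * integral\<^sup>S M g)"
    unfolding nn_integral_def[of M f] by (simp add: SUP_mult_left_ennreal)
  also have "\<dots> \<le> (\<integral>\<^sup>+x. c * f x \<partial>M)"
  proof (rule SUP_least)
    fix g assume "g \<in> {g. simple_function M g \<and> g \<le> f}"
    then have sg: "simple_function M g" and gf: "g \<le> f" by auto
    have "c * integral\<^sup>S M g = integral\<^sup>S M (\<lambda>x. c * g x)" using sg by simp
    also have "\<dots> = (\<integral>\<^sup>+x. c * g x \<partial>M)"
      using sg by (intro nn_integral_eq_simple_integral[symmetric]) (auto intro: simple_function_compose1)
    also have "\<dots> \<le> (\<integral>\<^sup>+x. c * f x \<partial>M)" using gf
      by (intro nn_integral_mono) (auto simp: le_fun_def intro: mult_left_mono)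
    finally show "c * integral\<^sup>S M g \<le> (\<integral>\<^sup>+x. c * f x \<partial>M)" .
  qed
  finally show ?thesis .
qed

lemma nn_cmult:
  assumes "c > 0"
  shows "(\<integral>\<^sup>+x. ennreal c * f x \<partial>M) = ennreal c * integral\<^sup>N M f"
proof (rule antisym)
  have inv: "ennreal c * ennreal (1/c) = 1" using assms by (simp flip: ennreal_mult)
  have "(\<integral>\<^sup>+x. ennreal c * f x \<partial>M) = ennreal c * (ennreal (1/c) * (\<integral>\<^sup>+x. ennreal c * f x \<partial>M))"
    by (simp add: mult.assoc[symmetric] inv)
  also have "\<dots> \<le> ennreal c * (\<integral>\<^sup>+x. ennreal (1/c) * (ennreal c * f x) \<partial>M)"
    by (intro mult_left_mono nn_cmult_le) auto
  also have "\<dots> = ennreal c * integral\<^sup>N M f"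
    by (simp add: mult.assoc[symmetric] mult.commute[of "ennreal (1/c)"] inv)
  finally show "(\<integral>\<^sup>+x. ennreal c * f x \<partial>M) \<le> ennreal c * integral\<^sup>N M f" .
  show "ennreal c * integral\<^sup>N M f \<le> (\<integral>\<^sup>+x. ennreal c * f x \<partial>M)" by (rule nn_cmult_le)
qed

lemma int_S2_cmult:
  assumes "c > 0"
  shows "int_S2 (\<lambda>\<omega>. ennreal c * h \<omega>) = ennreal c * int_S2 h"
  unfolding int_S2_def
  by (simp add: nn_cmult[OF assms, symmetric] mult.assoc mult.left_commute[of "ennreal c"])

lemma int_H_cmult:
  assumes "c > 0"
  shows "int_H u0 (\<lambda>u \<omega>. c * f u \<omega>) = ennreal c * int_H u0 f"
proof -
  have "int_H u0 (\<lambda>u \<omega>. c * f u \<omega>) = (\<integral>\<^sup>+ u. indicator {..<u0} u * int_S2 (\<lambda>\<omega>. ennreal c * ennreal (f u \<omega>)) \<partial>lborel)"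
    unfolding int_H_def using assms by (simp add: ennreal_mult')
  also have "\<dots> = (\<integral>\<^sup>+ u. ennreal c * (indicator {..<u0} u * int_S2 (\<lambda>\<omega>. ennreal (f u \<omega>))) \<partial>lborel)"
    by (simp add: int_S2_cmult[OF assms] mult.left_commute[of "ennreal c"])
  also have "\<dots> = ennreal c * int_H u0 f" unfolding int_H_def by (rule nn_cmult[OF assms])
  finally show ?thesis .
qed

lemma sph_sphere: "sph \<theta> \<psi> \<in> sphere 0 1"
proof -
  have "(norm (sph \<theta> \<psi>))^2 = (sin \<theta> * cos \<psi>)^2 + (sin \<theta> * sin \<psi>)^2 + (cos \<theta>)^2"
    unfolding sph_def by (simp add: norm_vec_def L2_set_def sum_3 real_sqrt_pow2 sum_nonneg)
  also have "\<dots> = (sin \<theta>)^2 * ((cos \<psi>)^2 + (sin \<psi>)^2) + (cos \<theta>)^2"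
    by (simp only: power_mult_distrib distrib_left mult.commute)
  also have "\<dots> = 1" by simp
  finally have "(norm (sph \<theta> \<psi>))^2 = 1^2" by simp
  then have "sqrt ((norm (sph \<theta> \<psi>))^2) = 1" by simp
  then have "norm (sph \<theta> \<psi>) = 1" by (simp only: real_sqrt_abs abs_norm_cancel)
  then show ?thesis by simp
qed

lemma int_S2_mono:
  assumes "\<And>\<omega>. \<omega> \<in> sphere 0 1 \<Longrightarrow> g \<omega> \<le> h \<omega>"
  shows "int_S2 g \<le> int_S2 h"
  unfolding int_S2_def
  by (intro nn_integral_mono mult_right_mono mult_left_mono assms sph_sphere) auto

lemma int_H_mono:
  assumes "\<And>u \<omega>. u < u0 \<Longrightarrow> \<omega> \<in> sphere 0 1 \<Longrightarrow> f u \<omega> \<le> h u \<omega>"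
  shows "int_H u0 f \<le> int_H u0 h"
  unfolding int_H_def
proof (intro nn_integral_mono)
  fix u
  show "indicator {..<u0} u * int_S2 (\<lambda>\<omega>. ennreal (f u \<omega>)) \<le> indicator {..<u0} u * int_S2 (\<lambda>\<omega>. ennreal (h u \<omega>))"
  proof (cases "u < u0")
    case True
    then show ?thesis by (intro mult_left_mono int_S2_mono ennreal_leI assms) auto
  qed auto
qed



lemma grad_nonneg:
  assumes sm: "smooth_up_to_scri M u0 \<phi>" and x: "(u, R, \<omega>) \<in> closOmega M u0"
  shows "0 \<le> grad_S2_sq \<phi> u R \<omega>"
proof -
  obtain S where S: "open S" "closOmega M u0 \<subseteq> S" "smooth_on \<phi> S"
    using sm unfolding smooth_up_to_scri_def by blast
  have "\<phi> differentiable_on S" using S(3) by (cases rule: smooth_on.cases) auto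
  then have "\<phi> differentiable (at (u, R, \<omega>))"
    using S(1,2) x by (metis differentiable_on_def at_within_open subsetD)
  then have "(\<phi> has_derivative frechet_derivative \<phi> (at (u, R, \<omega>))) (at (u, R, \<omega>))"
    by (simp add: frechet_derivative_works)
  then have bl: "bounded_linear (frechet_derivative \<phi> (at (u, R, \<omega>)))"
    by (rule has_derivative_bounded_linear)
  define D where "D = frechet_derivative \<phi> (at (u, R, \<omega>))"
  obtain K where K: "\<And>v. norm (D v) \<le> norm v * K" using bl unfolding D_def
    using bounded_linear.bounded by blast
  define A where "A = {v::real^3. inner v \<omega> = 0 \<and> norm v = 1}"
  obtain y :: "real^3" where y: "y \<noteq> 0" "orthogonal \<omega> y"
    using orthogonal_to_vector_exists[of \<omega>] by auto
  define v0 where "v0 = y /\<^sub>R norm y"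
  have v0A: "v0 \<in> A" unfolding A_def v0_def using y
    by (auto simp: orthogonal_def inner_commute)
  have bdd: "bdd_above ((\<lambda>v. (D (0, 0, v))\<^sup>2) ` A)"
  proof (rule bdd_aboveI2)
    fix v assume "v \<in> A"
    then have nv: "norm (0::real, 0::real, v) = 1" unfolding A_def by (simp add: norm_Pair)
    have "\<bar>D (0, 0, v)\<bar> \<le> K" using K[of "(0,0,v)"] nv by simp
    from power_mono[OF this abs_ge_zero, of 2] show "(D (0, 0, v))\<^sup>2 \<le> K^2" by simp
  qed
  have "0 \<le> (D (0, 0, v0))\<^sup>2" by simp
  also have "\<dots> \<le> (SUP v\<in>A. (D (0, 0, v))\<^sup>2)" by (rule cSUP_upper[OF v0A bdd])
  finally show ?thesis unfolding grad_S2_sq_def D_def A_def .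
qed



lemma flux_rewrite:
  fixes M s u R a b g t :: real
  assumes "s > 0" "R > 0" "R * u = -(s*t)"
  shows "flux_density M s u R a b g =
     (u*a)^2 + R^2 * (1-M*R)^2 * u^2 * a * b
     + (R^2 * b^2 / s) * ((1-M*R)^2 * (s^2 * (t^2*(1-M*R)^2) - 2*(2-s) * s * t + 2*(2-s)) / 2)
     + (1 - s*t + s*(t^2*(1-M*R)^2)/2) * g"
proof -
  have u: "u = -(s*t)/R" using assms by (simp add: field_simps)
  show ?thesis unfolding flux_density_def u using assms
    by (simp add: field_simps power2_eq_square)
qed

lemma comb_lo: "(F::real) = X + Z + YA + G \<Longrightarrow> Z \<ge> -(3/4)*X - YB \<Longrightarrow> YA - YB \<ge> Y1 \<Longrightarrow> G \<ge> g/20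
   \<Longrightarrow> X \<ge> 0 \<Longrightarrow> Y1 \<ge> 0 \<Longrightarrow> I = X + 20*Y1 + g \<Longrightarrow> 1/20 * I \<le> F"
  by linarith

lemma comb_hi: "(F::real) = X + Z + YA + G \<Longrightarrow> Z \<le> (3/4)*X + YB \<Longrightarrow> YA + YB \<le> 5 * Y1 \<Longrightarrow> G \<le> 5*g
   \<Longrightarrow> X \<ge> 0 \<Longrightarrow> I = X + Y1 + g \<Longrightarrow> F \<le> 5 * I"
  by linarith

lemma amgm: fixes A B :: real
  shows "A*B \<ge> -(3/4)*A^2 - B^2/3" "A*B \<le> (3/4)*A^2 + B^2/3"
proof -
  have "0 \<le> (3*A + 2*B)^2" "0 \<le> (3*A - 2*B)^2" by simp_all
  then show "A*B \<ge> -(3/4)*A^2 - B^2/3" "A*B \<le> (3/4)*A^2 + B^2/3"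
    by (simp_all add: power2_eq_square algebra_simps)
qed

lemma core:
  fixes M s u R a b g t :: real
  assumes M: "M > 0" and s: "0 < s" "s \<le> 1" and R: "R > 0" and Ru: "R * u = -(s*t)"
    and t: "99/100 \<le> t" "t \<le> 101/100" and m: "M * R \<le> 1/100" and g: "0 \<le> g"
  shows "1/20 * ((u^2 * a^2 + R / \<bar>u\<bar> * b^2 + g)) \<le> flux_density M s u R a b g"
    and "flux_density M s u R a b g \<le> 5 * ((u^2 * a^2 + R / \<bar>u\<bar> * b^2 + g))"
proof -
  define p where "p = (1-M*R)^2"
  define q where "q = t^2 * p"
  have p: "98/100 \<le> p" "p \<le> 1"
  proof -
    have "(99/100)^2 \<le> (1-M*R)^2" using m M R by (intro power_mono) auto
    then show "98/100 \<le> p" unfolding p_def by (simp add: power2_eq_square)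
    have "(1-M*R)^2 \<le> 1^2" using m M R by (intro power_mono) auto
    then show "p \<le> 1" unfolding p_def by simp
  qed
  have tpos: "t > 0" using t by simp
  have "R * u < 0" using Ru s tpos by simp
  then have u: "u < 0" using R by (simp add: mult_less_0_iff)
  have absu: "\<bar>u\<bar> = s*t/R" using Ru R u by (simp add: field_simps)
  define X where "X = (u*a)^2"
  define Y where "Y = R^2 * b^2 / s"
  define Qq where "Qq = s^2 * q - 2*(2-s) * s * t + 2*(2-s)"
  define Z where "Z = R^2 * (1-M*R)^2 * u^2 * a * b"
  have F: "flux_density M s u R a b g = X + Z + Y * (p * Qq / 2) + (1 - s*t + s*q/2) * g"
    unfolding X_def Y_def Qq_def Z_def q_def p_def by (rule flux_rewrite[OF s(1) R Ru])
  have Ygt: "Y \<ge> 0" unfolding Y_def using s by simp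
  have I: "u^2 * a^2 + R / \<bar>u\<bar> * b^2 + g = X + Y * (1/t) + g"
    unfolding X_def Y_def absu using s R tpos by (simp add: field_simps power2_eq_square)
  have sq: "(R^2 * p * u * b)^2 = Y * (p * s^3 * q)"
  proof -
    have "(R^2 * p * u * b)^2 = R^2 * b^2 * p^2 * (R*u)^2" by (simp add: algebra_simps power2_eq_square)
    also have "\<dots> = R^2 * b^2 * p^2 * (s*t)^2" using Ru by simp
    also have "\<dots> = Y * (p * s^3 * q)" unfolding Y_def q_def using s
      by (simp add: field_simps power2_eq_square power3_eq_cube)
    finally show ?thesis .
  qed
  have Zeq: "Z = (u*a) * (R^2 * p * u * b)" unfolding Z_def p_def by (simp add: algebra_simps power2_eq_square)
  have Zlo: "Z \<ge> -(3/4)*X - Y * (p * s^3 * q / 3)"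
    using amgm(1)[of "u*a" "R^2 * p * u * b"] unfolding Zeq X_def sq by simp
  have Zhi: "Z \<le> (3/4)*X + Y * (p * s^3 * q / 3)"
    using amgm(2)[of "u*a" "R^2 * p * u * b"] unfolding Zeq X_def sq by simp
  have K1: "1/(20*t) \<le> p * Qq / 2 - p * s^3 * q / 3" unfolding Qq_def using F1(1)[OF s t p q_def] .
  have K2: "p * Qq / 2 + p * s^3 * q / 3 \<le> 5 / t" unfolding Qq_def using F1(2)[OF s t p q_def] .
  have q1: "q \<le> 103/100" "96/100 \<le> q"
  proof -
    have t2a: "t^2 \<le> (101/100)^2" using t by (intro power_mono) auto
    have t2b: "(99/100)^2 \<le> t^2" using t by (intro power_mono) auto
    have "t^2 * p \<le> (101/100)^2 * 1" using t2a p by (intro mult_mono) auto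
    then show "q \<le> 103/100" using q_def by (simp add: power2_eq_square)
    have "(99/100)^2 * (98/100) \<le> t^2 * p" using t2b p by (intro mult_mono) auto
    then show "96/100 \<le> q" using q_def by (simp add: power2_eq_square)
  qed
  have st: "s*t \<le> s * (101/100)" "0 \<le> s*t" using s t by auto
  have sqb1: "s*q \<ge> s * (96/100)" using s q1 by (intro mult_left_mono) auto
  have sqb2: "s*q \<le> 1 * (103/100)" using s q1 by (intro mult_mono) auto
  note sqb = sqb1 sqb2
  have gam: "1/20 \<le> 1 - s*t + s*q/2" "1 - s*t + s*q/2 \<le> 5" using st sqb s by linarith+
  have G1: "(1 - s*t + s*q/2) * g \<ge> g/20" using mult_right_mono[OF gam(1) g] by simp
  have G2: "(1 - s*t + s*q/2) * g \<le> 5*g" using mult_right_mono[OF gam(2) g] by simp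
  have Y1: "Y * (p * Qq / 2) - Y * (p * s^3 * q / 3) \<ge> Y * (1/(20*t))"
    using mult_left_mono[OF K1 Ygt] by (simp add: algebra_simps)
  have Y2: "Y * (p * Qq / 2) + Y * (p * s^3 * q / 3) \<le> 5 * (Y * (1/t))"
    using mult_left_mono[OF K2 Ygt] by (simp add: algebra_simps)
  have X0: "X \<ge> 0" unfolding X_def by simp
  have Y10: "Y * (1/(20*t)) \<ge> 0" using Ygt tpos by simp
  have I2: "u^2 * a^2 + R / \<bar>u\<bar> * b^2 + g = X + 20 * (Y * (1/(20*t))) + g" using I by simp
  show "1/20 * ((u^2 * a^2 + R / \<bar>u\<bar> * b^2 + g)) \<le> flux_density M s u R a b g"
    by (rule comb_lo[OF F Zlo Y1 G1 X0 Y10 I2])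
  show "flux_density M s u R a b g \<le> 5 * ((u^2 * a^2 + R / \<bar>u\<bar> * b^2 + g))"
    by (rule comb_hi[OF F Zhi Y2 G2 X0 I])
qed


lemma scri0: "scri_flux_density M u 0 a b g = u^2 * a^2 + g"
  unfolding scri_flux_density_def Let_def by (simp add: field_simps power2_eq_square)

lemma energy0: "energy M 0 u0 \<phi> = int_H u0 (\<lambda>u \<omega>. u\<^sup>2 * (d_u \<phi> u 0 \<omega>)\<^sup>2 + grad_S2_sq \<phi> u 0 \<omega>)"
  unfolding energy_def by (simp add: scri0)

lemma Ienergy0: "Ienergy M 0 u0 \<phi> = int_H u0 (\<lambda>u \<omega>. u\<^sup>2 * (d_u \<phi> u 0 \<omega>)\<^sup>2 + grad_S2_sq \<phi> u 0 \<omega>)"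
  unfolding Ienergy_def Rsurf_def Let_def by simp

theorem proposition1:
  fixes M :: real
  assumes "M > 0"
  shows "\<exists>U < 0. \<exists>c C. 0 < c \<and> c \<le> C \<and>
    (\<forall>u0 < U. \<forall>s \<in> {0..1}. \<forall>\<phi>. smooth_up_to_scri M u0 \<phi> \<longrightarrow>
        ennreal c * Ienergy M s u0 \<phi> \<le> energy M s u0 \<phi> \<and>
        energy M s u0 \<phi> \<le> ennreal C * Ienergy M s u0 \<phi>) \<and>
    (\<forall>u0 < U. \<forall>\<phi>. smooth_up_to_scri M u0 \<phi> \<longrightarrow>
        energy M 0 u0 \<phi> =
          int_H u0 (\<lambda>u \<omega>. u\<^sup>2 * (d_u \<phi> u 0 \<omega>)\<^sup>2 + grad_S2_sq \<phi> u 0 \<omega>))"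
proof -
  obtain U where U: "U < 0" and HU: "\<And>s u. 0 < s \<Longrightarrow> s \<le> 1 \<Longrightarrow> u < U \<Longrightarrow>
     Rsurf M s u > 0 \<and> Rsurf M s u < 1/M \<and> u + rstar M (1 / Rsurf M s u) \<ge> 0 \<and>
     (\<exists>t. 99/100 \<le> t \<and> t \<le> 101/100 \<and> Rsurf M s u * u = -(s*t)) \<and> M * Rsurf M s u \<le> 1/100"
    using choose_U[OF assms] by blast
  have main: "ennreal (1/20) * Ienergy M s u0 \<phi> \<le> energy M s u0 \<phi> \<and>
        energy M s u0 \<phi> \<le> ennreal 5 * Ienergy M s u0 \<phi>"
    if u0: "u0 < U" and s: "s \<in> {0..1}" and sm: "smooth_up_to_scri M u0 \<phi>" for u0 s \<phi>
  proof (cases "s = 0")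
    case True
    have E: "energy M s u0 \<phi> = Ienergy M s u0 \<phi>" using True energy0 Ienergy0 by simp
    have a: "ennreal (1/20) * Ienergy M s u0 \<phi> \<le> 1 * Ienergy M s u0 \<phi>"
      by (intro mult_right_mono) (auto simp: ennreal_le_1)
    have b: "1 * Ienergy M s u0 \<phi> \<le> ennreal 5 * Ienergy M s u0 \<phi>"
      by (intro mult_right_mono) (auto simp: ennreal_ge_1)
    show ?thesis using a b E by simp
  next
    case False
    then have s: "0 < s" "s \<le> 1" using s by auto
    have pt: "1/20 * (u\<^sup>2 * (d_u \<phi> u R \<omega>)\<^sup>2 + R / \<bar>u\<bar> * (d_R \<phi> u R \<omega>)\<^sup>2 + grad_S2_sq \<phi> u R \<omega>)
              \<le> flux_density M s u R (d_u \<phi> u R \<omega>) (d_R \<phi> u R \<omega>) (grad_S2_sq \<phi> u R \<omega>) \<and>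
            flux_density M s u R (d_u \<phi> u R \<omega>) (d_R \<phi> u R \<omega>) (grad_S2_sq \<phi> u R \<omega>)
              \<le> 5 * (u\<^sup>2 * (d_u \<phi> u R \<omega>)\<^sup>2 + R / \<bar>u\<bar> * (d_R \<phi> u R \<omega>)\<^sup>2 + grad_S2_sq \<phi> u R \<omega>)"
      if u: "u < u0" and w: "\<omega> \<in> sphere 0 1" and R: "R = Rsurf M s u" for u \<omega> R
    proof -
      have uU: "u < U" using u u0 by simp
      note h = HU[OF s uU]
      obtain t where t: "99/100 \<le> t" "t \<le> 101/100" "R * u = -(s*t)" using h R by blast
      have "(u, R, \<omega>) \<in> closOmega M u0" unfolding closOmega_def using h R w u by auto
      then have g: "0 \<le> grad_S2_sq \<phi> u R \<omega>" by (rule grad_nonneg[OF sm])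
      have RR: "R > 0" "M * R \<le> 1/100" using h R by auto
      show ?thesis using core[OF assms s RR(1) t(3) t(1) t(2) RR(2) g] by blast
    qed
    have Eeq: "energy M s u0 \<phi> = int_H u0 (\<lambda>u \<omega>. let R = Rsurf M s u in
          flux_density M s u R (d_u \<phi> u R \<omega>) (d_R \<phi> u R \<omega>) (grad_S2_sq \<phi> u R \<omega>))"
      unfolding energy_def by (simp only: if_not_P[OF False])
    have lo: "ennreal (1/20) * Ienergy M s u0 \<phi> \<le> energy M s u0 \<phi>"
    proof -
      have "ennreal (1/20) * Ienergy M s u0 \<phi> = int_H u0 (\<lambda>u \<omega>. 1/20 * (let R = Rsurf M s u in
        u\<^sup>2 * (d_u \<phi> u R \<omega>)\<^sup>2 + R / \<bar>u\<bar> * (d_R \<phi> u R \<omega>)\<^sup>2 + grad_S2_sq \<phi> u R \<omega>))"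
        unfolding Ienergy_def by (rule int_H_cmult[symmetric]) simp
      also have "\<dots> \<le> energy M s u0 \<phi>" unfolding Eeq
        by (rule int_H_mono) (unfold Let_def, rule conjunct1[OF pt], assumption, assumption, rule refl)
      finally show ?thesis .
    qed
    have hi: "energy M s u0 \<phi> \<le> ennreal 5 * Ienergy M s u0 \<phi>"
    proof -
      have "energy M s u0 \<phi> \<le> int_H u0 (\<lambda>u \<omega>. 5 * (let R = Rsurf M s u in
        u\<^sup>2 * (d_u \<phi> u R \<omega>)\<^sup>2 + R / \<bar>u\<bar> * (d_R \<phi> u R \<omega>)\<^sup>2 + grad_S2_sq \<phi> u R \<omega>))"
        unfolding Eeq
        by (rule int_H_mono) (unfold Let_def, rule conjunct2[OF pt], assumption, assumption, rule refl)
      also have "\<dots> = ennreal 5 * Ienergy M s u0 \<phi>"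
        unfolding Ienergy_def by (rule int_H_cmult) simp
      finally show ?thesis .
    qed
    show ?thesis using lo hi by simp
  qed
  have A: "\<forall>u0 < U. \<forall>s \<in> {0..1}. \<forall>\<phi>. smooth_up_to_scri M u0 \<phi> \<longrightarrow>
        ennreal (1/20) * Ienergy M s u0 \<phi> \<le> energy M s u0 \<phi> \<and>
        energy M s u0 \<phi> \<le> ennreal 5 * Ienergy M s u0 \<phi>" using main by blast
  have B: "\<forall>u0 < U. \<forall>\<phi>. smooth_up_to_scri M u0 \<phi> \<longrightarrow>
        energy M 0 u0 \<phi> =
          int_H u0 (\<lambda>u \<omega>. u\<^sup>2 * (d_u \<phi> u 0 \<omega>)\<^sup>2 + grad_S2_sq \<phi> u 0 \<omega>)" using energy0 by blast
  have C: "(0::real) < 1/20" "(1/20::real) \<le> 5" by simp_all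
  show ?thesis using U A B C by blast
qed

end
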